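(* Let $G=(V,E)$ be a simple undirected graph with $V=[n]$ and let $k\ge1$ be an integer such that $\alpha_k(G)=k\,\vartheta(G)$. Then $$\vartheta_k(G)=\vartheta'_k(G)=\theta^1_k(G)=\theta^2_k(G)=\theta^3_k(G)=k\,\alpha(G)=\alpha_k(G).$$
   Context: $\alpha(G)$ is the stability number; $\alpha_k(G)$ is the maximum number of vertices of an induced $k$-colorable subgraph of $G$. $J$ is the all-ones matrix, $\langle A,B\rangle=\mathrm{trace}(AB)$, $\ge0$ entrywise, $\succeq0$ positive semidefinite, $\mathbb S^m$ symmetric $m\times m$ matrices. $\vartheta(G)=\max\{\langle J,Z\rangle: Z\in\mathbb S^n,\ Z_{ij}=0\ (\{i,j\}\in E),\ \langle I,Z\rangle=1,\ Z\succeq 0\}$ (Lovász number). $\vartheta_k(G)=\max\{\langle J,Z\rangle: Z\in\mathbb S^n,\ Z_{ij}=0\ (\{i,j\}\in E),\ \langle I,Z\rangle=k,\ Z\succeq0,\ I-Z\succeq0\}$, and $\vartheta'_k(G)$ is the same with the additional constraint $Z\ge0$. $\theta^1_k(G)=\max\langle I,Z\rangle$ over $Z,X\in\mathbb S^n$ subject to $Z_{ij}=0$ for $\{i,j\}\in E$; $X_{ii}=0$ for $i\in[n]$; $Z,X\ge0$; $Z-X\succeq0$; $\begin{bmatrix}1&\mathrm{diag}(Z)^{\top}\\ \mathrm{diag}(Z)&Z+(k-1)X\end{bmatrix}\succeq0$; $1-Z_{ii}-Z_{jj}+Z_{ij}+(k-1)X_{ij}\ge0$ for $i>j$; $Z_{ii}-Z_{ij}-(k-1)X_{ij}\ge0$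 for $i\ne j$. $\theta^2_k(G)$ is the optimal value of the same problem without the last two families of linear inequalities. $\theta^3_k(G)=\max\{\langle I,Z\rangle: Z\in\mathbb S^n,\ Z_{ij}=0\ (\{i,j\}\in E),\ Z_{ii}\le1,\ Z\ge0,\ \begin{bmatrix}k&\mathrm{diag}(Z)^{\top}\\ \mathrm{diag}(Z)&Z\end{bmatrix}\succeq0\}$. *)

theory Defs
  imports Complex_Main
begin

(* Graphs: vertex set [n] = {0..<n}; edges given by a relation E (assumed symmetric,
   irreflexive in the theorem). Matrices: functions nat => nat => real, only entries
   with indices < m matter. *)

definition stable_set :: "nat \<Rightarrow> (nat \<Rightarrow> nat \<Rightarrow> bool) \<Rightarrow> nat set \<Rightarrow> bool" where
  "stable_set n E S \<longleftrightarrow> S \<subseteq> {0..<n} \<and> (\<forall>i\<in>S. \<forall>j\<in>S. \<not> E i j)"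

definition k_colorable_set :: "nat \<Rightarrow> (nat \<Rightarrow> nat \<Rightarrow> bool) \<Rightarrow> nat \<Rightarrow> nat set \<Rightarrow> bool" where
  "k_colorable_set n E k S \<longleftrightarrow> S \<subseteq> {0..<n} \<and>
     (\<exists>c :: nat \<Rightarrow> nat. (\<forall>i\<in>S. c i < k) \<and> (\<forall>i\<in>S. \<forall>j\<in>S. E i j \<longrightarrow> c i \<noteq> c j))"

definition alpha :: "nat \<Rightarrow> (nat \<Rightarrow> nat \<Rightarrow> bool) \<Rightarrow> nat" where
  "alpha n E = Max (card ` {S. stable_set n E S})"

definition alpha_k :: "nat \<Rightarrow> (nat \<Rightarrow> nat \<Rightarrow> bool) \<Rightarrow> nat \<Rightarrow> nat" where
  "alpha_k n E k = Max (card ` {S. k_colorable_set n E k S})"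

definition symm :: "nat \<Rightarrow> (nat \<Rightarrow> nat \<Rightarrow> real) \<Rightarrow> bool" where
  "symm m A \<longleftrightarrow> (\<forall>i<m. \<forall>j<m. A i j = A j i)"

definition psd :: "nat \<Rightarrow> (nat \<Rightarrow> nat \<Rightarrow> real) \<Rightarrow> bool" where
  "psd m A \<longleftrightarrow> symm m A \<and> (\<forall>x :: nat \<Rightarrow> real. (\<Sum>i<m. \<Sum>j<m. x i * A i j * x j) \<ge> 0)"

definition nonneg :: "nat \<Rightarrow> (nat \<Rightarrow> nat \<Rightarrow> real) \<Rightarrow> bool" where
  "nonneg m A \<longleftrightarrow> (\<forall>i<m. \<forall>j<m. A i j \<ge> 0)"

definition idm :: "nat \<Rightarrow> nat \<Rightarrow> real" where
  "idm i j = (if i = j then 1 else 0)"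

definition trace_m :: "nat \<Rightarrow> (nat \<Rightarrow> nat \<Rightarrow> real) \<Rightarrow> real" where
  "trace_m m A = (\<Sum>i<m. A i i)"

definition sum_all :: "nat \<Rightarrow> (nat \<Rightarrow> nat \<Rightarrow> real) \<Rightarrow> real" where
  "sum_all m A = (\<Sum>i<m. \<Sum>j<m. A i j)"

definition zero_on_edges :: "nat \<Rightarrow> (nat \<Rightarrow> nat \<Rightarrow> bool) \<Rightarrow> (nat \<Rightarrow> nat \<Rightarrow> real) \<Rightarrow> bool" where
  "zero_on_edges n E Z \<longleftrightarrow> (\<forall>i<n. \<forall>j<n. E i j \<longrightarrow> Z i j = 0)"

(* the (m+1) x (m+1) matrix [[c, d^T],[d, M]] *)
definition bordered :: "real \<Rightarrow> (nat \<Rightarrow> real) \<Rightarrow> (nat \<Rightarrow> nat \<Rightarrow> real) \<Rightarrow> nat \<Rightarrow> nat \<Rightarrow> real" where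
  "bordered c d M i j = (if i = 0 \<and> j = 0 then c else if i = 0 then d (j - 1)
      else if j = 0 then d (i - 1) else M (i - 1) (j - 1))"

definition lovasz_theta :: "nat \<Rightarrow> (nat \<Rightarrow> nat \<Rightarrow> bool) \<Rightarrow> real" where
  "lovasz_theta n E = Sup {sum_all n Z | Z. symm n Z \<and> zero_on_edges n E Z \<and>
      trace_m n Z = 1 \<and> psd n Z}"

definition vartheta_k :: "nat \<Rightarrow> (nat \<Rightarrow> nat \<Rightarrow> bool) \<Rightarrow> nat \<Rightarrow> real" where
  "vartheta_k n E k = Sup {sum_all n Z | Z. symm n Z \<and> zero_on_edges n E Z \<and>
      trace_m n Z = real k \<and> psd n Z \<and> psd n (\<lambda>i j. idm i j - Z i j)}"

definition vartheta'_k :: "nat \<Rightarrow> (nat \<Rightarrow> nat \<Rightarrow> bool) \<Rightarrow> nat \<Rightarrow> real" where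
  "vartheta'_k n E k = Sup {sum_all n Z | Z. symm n Z \<and> zero_on_edges n E Z \<and>
      trace_m n Z = real k \<and> psd n Z \<and> psd n (\<lambda>i j. idm i j - Z i j) \<and> nonneg n Z}"

definition theta2_feas :: "nat \<Rightarrow> (nat \<Rightarrow> nat \<Rightarrow> bool) \<Rightarrow> nat \<Rightarrow>
    (nat \<Rightarrow> nat \<Rightarrow> real) \<Rightarrow> (nat \<Rightarrow> nat \<Rightarrow> real) \<Rightarrow> bool" where
  "theta2_feas n E k Z X \<longleftrightarrow> symm n Z \<and> symm n X \<and> zero_on_edges n E Z \<and>
      (\<forall>i<n. X i i = 0) \<and> nonneg n Z \<and> nonneg n X \<and>
      psd n (\<lambda>i j. Z i j - X i j) \<and>
      psd (n + 1) (bordered 1 (\<lambda>i. Z i i) (\<lambda>i j. Z i j + (real k - 1) * X i j))"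

definition theta2_k :: "nat \<Rightarrow> (nat \<Rightarrow> nat \<Rightarrow> bool) \<Rightarrow> nat \<Rightarrow> real" where
  "theta2_k n E k = Sup {trace_m n Z | Z X. theta2_feas n E k Z X}"

definition theta1_k :: "nat \<Rightarrow> (nat \<Rightarrow> nat \<Rightarrow> bool) \<Rightarrow> nat \<Rightarrow> real" where
  "theta1_k n E k = Sup {trace_m n Z | Z X. theta2_feas n E k Z X \<and>
      (\<forall>i<n. \<forall>j<n. i > j \<longrightarrow> 1 - Z i i - Z j j + Z i j + (real k - 1) * X i j \<ge> 0) \<and>
      (\<forall>i<n. \<forall>j<n. i \<noteq> j \<longrightarrow> Z i i - Z i j - (real k - 1) * X i j \<ge> 0)}"

definition theta3_k :: "nat \<Rightarrow> (nat \<Rightarrow> nat \<Rightarrow> bool) \<Rightarrow> nat \<Rightarrow> real" where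
  "theta3_k n E k = Sup {trace_m n Z | Z. symm n Z \<and> zero_on_edges n E Z \<and>
      (\<forall>i<n. Z i i \<le> 1) \<and> nonneg n Z \<and>
      psd (n + 1) (bordered (real k) (\<lambda>i. Z i i) Z)}"

end

theory Submission
  imports Defs "HOL-Analysis.Convex"
begin


definition qf :: "nat \<Rightarrow> (nat \<Rightarrow> nat \<Rightarrow> real) \<Rightarrow> (nat \<Rightarrow> real) \<Rightarrow> real" where
  "qf m A x = (\<Sum>i<m. \<Sum>j<m. x i * A i j * x j)"

lemma dl[simp]: "(\<Sum>j<m. (if j = i then 1 else 0) * (g j::real)) = (if i < (m::nat) then g i else 0)"
proof -
  have "(\<Sum>j<m. (if j = i then 1 else 0) * (g j::real)) = (\<Sum>j<m. (if j = i then g j else 0))"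
    by (rule sum.cong) auto
  also have "\<dots> = (if i < (m::nat) then g i else 0)"
    by (subst sum.delta) auto
  finally show ?thesis .
qed

lemma dr[simp]: "(\<Sum>j<m. (g j::real) * (if j = i then 1 else 0)) = (if i < (m::nat) then g i else 0)"
  using dl[where m=m and i=i and g=g] by (simp add: mult.commute)

lemma psd_qf: "psd m A \<longleftrightarrow> symm m A \<and> (\<forall>x. 0 \<le> qf m A x)"
  by (simp add: psd_def qf_def)

lemma qf_bordered:
  "qf (Suc m) (bordered c d M) x = c * (x 0)^2 + 2 * x 0 * (\<Sum>i<m. d i * x (Suc i)) + qf m M (\<lambda>i. x (Suc i))"
  unfolding qf_def
  apply (simp only: sum.lessThan_Suc_shift)
  by (simp add: bordered_def sum.distrib sum_distrib_left sum_distrib_right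
      power2_eq_square algebra_simps)

lemma qf_lin:
  "qf m (\<lambda>i j. a * A i j + b * B i j) x = a * qf m A x + b * qf m B x"
  unfolding qf_def by (simp add: algebra_simps sum.distrib sum_distrib_left)

lemma qf_rank:
  assumes "\<And>i j. A i j = (\<Sum>c\<in>C. f c i * f c j)"
  shows "qf m A x = (\<Sum>c\<in>C. (\<Sum>i<m. f c i * x i)^2)"
proof -
  have "qf m A x = (\<Sum>i<m. \<Sum>j<m. \<Sum>c\<in>C. (f c i * x i) * (f c j * x j))"
    unfolding qf_def assms by (simp add: sum_distrib_left sum_distrib_right algebra_simps)
  also have "\<dots> = (\<Sum>i<m. \<Sum>c\<in>C. \<Sum>j<m. (f c i * x i) * (f c j * x j))"
    by (rule sum.cong[OF refl], rule sum.swap)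
  also have "\<dots> = (\<Sum>c\<in>C. \<Sum>i<m. \<Sum>j<m. (f c i * x i) * (f c j * x j))"
    by (rule sum.swap)
  also have "\<dots> = (\<Sum>c\<in>C. (\<Sum>i<m. f c i * x i)^2)"
    by (simp add: power2_eq_square sum_product)
  finally show ?thesis .
qed

lemma psd_diag:
  assumes "psd m A" "i < m" shows "0 \<le> A i i"
proof -
  have "0 \<le> qf m A (\<lambda>t. if t = i then 1 else 0)" using assms psd_qf by blast
  thus ?thesis using assms(2) by (simp add: qf_def)
qed

lemma psd_pair:
  assumes "psd m A" "i < m" "j < m" shows "2 * A i j \<le> A i i + A j j"
proof (cases "i = j")
  case False
  have "0 \<le> qf m A (\<lambda>t. (if t = i then 1 else 0) - (if t = j then 1 else 0))" using assms psd_qf by blast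
  moreover have "A i j = A j i" using assms psd_def symm_def by blast
  ultimately show ?thesis using assms(2,3) False
    by (simp add: qf_def left_diff_distrib right_diff_distrib sum_subtractf)
qed simp

lemma psd_sum_all: assumes "psd m A" shows "sum_all m A \<le> real m * trace_m m A"
proof -
  have "2 * sum_all m A = (\<Sum>i<m. \<Sum>j<m. 2 * A i j)"
    by (simp add: sum_all_def sum_distrib_left)
  also have "\<dots> \<le> (\<Sum>i<m. \<Sum>j<m. A i i + A j j)"
    by (intro sum_mono) (use psd_pair[OF assms] in auto)
  also have "\<dots> = 2 * (real m * trace_m m A)"
    by (simp add: trace_m_def sum.distrib sum_distrib_left)
  finally show ?thesis by simp
qed

lemma psd_trace_nonneg: assumes "psd m A" shows "0 \<le> trace_m m A"
  unfolding trace_m_def by (rule sum_nonneg) (use psd_diag[OF assms] in auto)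

lemma theta_set_bdd: "bdd_above {sum_all n Z | Z. symm n Z \<and> zero_on_edges n E Z \<and>
      trace_m n Z = 1 \<and> psd n Z}"
proof (rule bdd_aboveI[of _ "real n"])
  fix y assume "y \<in> {sum_all n Z | Z. symm n Z \<and> zero_on_edges n E Z \<and> trace_m n Z = 1 \<and> psd n Z}"
  then obtain Z where "y = sum_all n Z" "trace_m n Z = 1" "psd n Z" by blast
  thus "y \<le> real n" using psd_sum_all[of n Z] by simp
qed

lemma theta_upper:
  assumes "symm n Z" "zero_on_edges n E Z" "psd n Z"
  shows "sum_all n Z \<le> lovasz_theta n E * trace_m n Z"
proof (cases "trace_m n Z = 0")
  case True
  then show ?thesis using psd_sum_all[OF assms(3)] by simp
next
  case False
  hence tp: "trace_m n Z > 0" using psd_trace_nonneg[OF assms(3)] by simp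
  define t where "t = trace_m n Z"
  define W where "W = (\<lambda>i j. (1/t) * Z i j)"
  have "symm n W" using assms(1) by (simp add: W_def symm_def)
  moreover have "zero_on_edges n E W" using assms(2) by (simp add: W_def zero_on_edges_def)
  moreover have "trace_m n W = 1" using tp by (simp add: W_def t_def trace_m_def flip: sum_divide_distrib)
  moreover have "psd n W"
  proof -
    have "qf n W x = (1/t) * qf n Z x" for x
      using qf_lin[of n "1/t" Z 0 Z x] by (simp add: W_def)
    thus ?thesis using assms(3) tp \<open>symm n W\<close> by (simp add: psd_qf t_def)
  qed
  ultimately have mem: "sum_all n W \<in> {sum_all n Z | Z. symm n Z \<and> zero_on_edges n E Z \<and> trace_m n Z = 1 \<and> psd n Z}"
    by blast
  have "sum_all n W \<le> lovasz_theta n E"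
    unfolding lovasz_theta_def by (rule cSup_upper[OF mem theta_set_bdd])
  moreover have "sum_all n W = sum_all n Z / t"
    by (simp add: W_def sum_all_def flip: sum_divide_distrib)
  ultimately show ?thesis using tp by (simp add: t_def field_simps)
qed



lemma sum_ind: "finite A \<Longrightarrow> (\<Sum>i\<in>A. (if P i then 1 else 0::real)) = real (card {i\<in>A. P i})"
  by (simp add: sum.If_cases Int_def conj_commute)

lemma stable_fin: "finite {S. stable_set n E S}"
  by (rule finite_subset[of _ "Pow {0..<n}"]) (auto simp: stable_set_def)

lemma kcol_fin: "finite {S. k_colorable_set n E k S}"
  by (rule finite_subset[of _ "Pow {0..<n}"]) (auto simp: k_colorable_set_def)

lemma alpha_ge: "stable_set n E S \<Longrightarrow> card S \<le> alpha n E"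
  unfolding alpha_def using stable_fin by (intro Max_ge) auto

lemma alpha_att: "\<exists>S. stable_set n E S \<and> card S = alpha n E"
proof -
  have "{} \<in> {S. stable_set n E S}" by (simp add: stable_set_def)
  hence "alpha n E \<in> card ` {S. stable_set n E S}"
    unfolding alpha_def using stable_fin by (intro Max_in) auto
  thus ?thesis by auto
qed

lemma alphak_att: "\<exists>S. k_colorable_set n E k S \<and> card S = alpha_k n E k"
proof -
  have "{} \<in> {S. k_colorable_set n E k S}" by (simp add: k_colorable_set_def)
  hence "alpha_k n E k \<in> card ` {S. k_colorable_set n E k S}"
    unfolding alpha_k_def using kcol_fin by (intro Max_in) auto
  thus ?thesis by auto
qed

lemma alpha_pos: assumes "n \<ge> 1" "\<not> E 0 0" shows "alpha n E \<ge> 1"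
proof -
  have "stable_set n E {0}" using assms by (simp add: stable_set_def)
  from alpha_ge[OF this] show ?thesis by simp
qed

lemma card_classes:
  fixes col :: "'a \<Rightarrow> nat" and k :: nat
  assumes "finite S" "\<forall>i\<in>S. col i < k"
  shows "card S = (\<Sum>c<k. card {i\<in>S. col i = c})"
proof -
  have "S = (\<Union>c\<in>{..<k}. {i\<in>S. col i = c})" using assms(2) by auto
  hence "card S = card (\<Union>c\<in>{..<k}. {i\<in>S. col i = c})" by simp
  also have "\<dots> = (\<Sum>c<k. card {i\<in>S. col i = c})"
    by (rule card_UN_disjoint) (use assms(1) in auto)
  finally show ?thesis .
qed

lemma class_stable:
  assumes "k_colorable_set n E k S" "\<forall>i\<in>S. \<forall>j\<in>S. E i j \<longrightarrow> col i \<noteq> col j"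
  shows "stable_set n E {i\<in>S. col i = c}"
  using assms unfolding stable_set_def k_colorable_set_def by blast

lemma alphak_le: "alpha_k n E k \<le> k * alpha n E"
proof -
  obtain S where S: "k_colorable_set n E k S" "card S = alpha_k n E k" using alphak_att by blast
  then obtain col where col: "\<forall>i\<in>S. col i < k" "\<forall>i\<in>S. \<forall>j\<in>S. E i j \<longrightarrow> col i \<noteq> col j"
    unfolding k_colorable_set_def by blast
  have fin: "finite S" using S(1) unfolding k_colorable_set_def by (auto intro: finite_subset)
  have "alpha_k n E k = (\<Sum>c<k. card {i\<in>S. col i = c})" using card_classes[OF fin col(1)] S(2) by simp
  also have "\<dots> \<le> (\<Sum>c<k. alpha n E)"
    by (intro sum_mono alpha_ge class_stable[OF S(1) col(2)])
  finally show ?thesis by simp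
qed



lemma sum_all_qf: "sum_all m A = qf m A (\<lambda>_. 1)"
  by (simp add: sum_all_def qf_def)

lemma symm_bordered: "symm m M \<Longrightarrow> symm (Suc m) (bordered c d M)"
  by (auto simp: symm_def bordered_def)

lemma qf_idm: "qf m idm x = (\<Sum>i<m. (x i)^2)"
proof -
  have "qf m idm x = (\<Sum>i<m. \<Sum>j<m. (x i * x j) * (if j = i then 1 else 0))"
    unfolding qf_def idm_def by (intro sum.cong refl) (auto)
  also have "\<dots> = (\<Sum>i<m. (x i)^2)" by (simp add: power2_eq_square)
  finally show ?thesis .
qed

context
  fixes n :: nat and E :: "nat \<Rightarrow> nat \<Rightarrow> bool" and S :: "nat set" and col :: "nat \<Rightarrow> nat"
    and K :: nat and a :: nat
  assumes Ssub: "S \<subseteq> {0..<n}"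
    and colK: "\<forall>i\<in>S. col i < K"
    and cls: "\<forall>c<K. card {i\<in>S. col i = c} = a"
    and proper: "\<forall>i\<in>S. \<forall>j\<in>S. E i j \<longrightarrow> col i \<noteq> col j"
begin

definition "u c i = (if i \<in> S \<and> col i = c then 1 else 0::real)"
definition "Zc i j = (if i \<in> S \<and> j \<in> S \<and> col i = col j then 1 else 0::real)"
definition "vv i = (if i \<in> S then 1 else 0::real)"

lemma D1: "(\<Sum>c<K. u c i * u c j) = Zc i j"
proof (cases "i \<in> S \<and> j \<in> S \<and> col i = col j")
  case True
  have "(\<Sum>c<K. u c i * u c j) = (\<Sum>c<K. if c = col i then 1 else 0)"
    by (intro sum.cong refl) (use True in \<open>auto simp: u_def\<close>)
  also have "\<dots> = 1" using True colK by (subst sum.delta) auto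
  finally show ?thesis using True by (simp add: Zc_def)
next
  case False
  hence "(\<Sum>c<K. u c i * u c j) = 0" by (intro sum.neutral) (auto simp: u_def)
  thus ?thesis using False unfolding Zc_def by presburger
qed

lemma D2: "(\<Sum>c<K. u c i) = vv i"
proof (cases "i \<in> S")
  case True
  have "(\<Sum>c<K. u c i) = (\<Sum>c<K. if c = col i then 1 else 0)"
    by (intro sum.cong refl) (use True in \<open>auto simp: u_def\<close>)
  also have "\<dots> = 1" using True colK by (subst sum.delta) auto
  finally show ?thesis using True by (simp add: vv_def)
next
  case False
  thus ?thesis by (simp add: u_def vv_def)
qed

lemma D3: "c < K \<Longrightarrow> (\<Sum>i<n. u c i) = real a"
proof -
  assume c: "c < K"
  have "(\<Sum>i<n. u c i) = real (card {i\<in>{..<n}. i \<in> S \<and> col i = c})"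
    unfolding u_def by (rule sum_ind) simp
  also have "{i\<in>{..<n}. i \<in> S \<and> col i = c} = {i\<in>S. col i = c}" using Ssub by auto
  finally show ?thesis using cls c by simp
qed

lemma Zc_diag: "Zc i i = vv i" by (simp add: Zc_def vv_def)

lemma uu: "u c i * u c i = u c i" by (simp add: u_def)

lemma trace_Zc: "trace_m n Zc = real K * real a"
proof -
  have "trace_m n Zc = (\<Sum>i<n. \<Sum>c<K. u c i)" by (simp add: trace_m_def Zc_diag D2)
  also have "\<dots> = (\<Sum>c<K. \<Sum>i<n. u c i)" by (rule sum.swap)
  also have "\<dots> = (\<Sum>c<K. real a)" by (intro sum.cong refl) (simp add: D3)
  finally show ?thesis by simp
qed

lemma qf_Zc: "qf n Zc x = (\<Sum>c<K. (\<Sum>i<n. u c i * x i)^2)"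
  by (rule qf_rank) (simp add: D1)

lemma sum_vv: "(\<Sum>i<n. vv i * x i) = (\<Sum>c<K. \<Sum>i<n. u c i * x i)"
proof -
  have "(\<Sum>i<n. vv i * x i) = (\<Sum>i<n. \<Sum>c<K. u c i * x i)"
    by (simp add: D2[symmetric] sum_distrib_right)
  also have "\<dots> = (\<Sum>c<K. \<Sum>i<n. u c i * x i)" by (rule sum.swap)
  finally show ?thesis .
qed

lemma symm_Zc: "symm n Zc" by (auto simp: symm_def Zc_def)
lemma zoe_Zc: "zero_on_edges n E Zc" using proper by (auto simp: zero_on_edges_def Zc_def)
lemma nonneg_Zc: "nonneg n Zc" by (auto simp: nonneg_def Zc_def)
lemma psd_Zc: "psd n Zc" by (simp add: psd_qf symm_Zc qf_Zc sum_nonneg)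

lemma sum_all_Zc: "sum_all n Zc = real K * (real a)^2"
  by (simp add: sum_all_qf qf_Zc D3)

lemma qf_Zc_le: "qf n Zc x \<le> real a * (\<Sum>i<n. (x i)^2)"
proof -
  have cs: "(\<Sum>i<n. u c i * x i)^2 \<le> real a * (\<Sum>i<n. u c i * (x i)^2)" if c: "c < K" for c
  proof -
    have "(\<Sum>i<n. u c i * x i)^2 = (\<Sum>i<n. u c i * (u c i * x i))^2"
      by (intro arg_cong[where f="\<lambda>t. t^2"] sum.cong refl) (simp add: u_def)
    also have "\<dots> \<le> (\<Sum>i<n. (u c i)^2) * (\<Sum>i<n. (u c i * x i)^2)"
      by (rule Cauchy_Schwarz_ineq_sum)
    also have "(\<Sum>i<n. (u c i)^2) = real a" using D3[OF c] by (simp add: power2_eq_square uu)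
    also have "(\<Sum>i<n. (u c i * x i)^2) = (\<Sum>i<n. u c i * (x i)^2)"
      by (intro sum.cong refl) (simp add: u_def)
    finally show ?thesis .
  qed
  have "qf n Zc x \<le> (\<Sum>c<K. real a * (\<Sum>i<n. u c i * (x i)^2))"
    unfolding qf_Zc by (intro sum_mono cs) simp
  also have "\<dots> = real a * (\<Sum>i<n. vv i * (x i)^2)"
    by (simp add: sum_vv sum_distrib_left)
  also have "\<dots> \<le> real a * (\<Sum>i<n. (x i)^2)"
    by (intro mult_left_mono sum_mono) (auto simp: vv_def)
  finally show ?thesis .
qed

lemma witness_vartheta:
  assumes "a > 0"
  defines "Zv \<equiv> (\<lambda>i j. (1 / real a) * Zc i j)"
  shows "symm n Zv" "zero_on_edges n E Zv" "trace_m n Zv = real K" "psd n Zv"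
    "psd n (\<lambda>i j. idm i j - Zv i j)" "nonneg n Zv" "sum_all n Zv = real K * real a"
proof -
  show "symm n Zv" using symm_Zc by (simp add: symm_def Zv_def)
  show "zero_on_edges n E Zv" using zoe_Zc by (simp add: zero_on_edges_def Zv_def)
  show "nonneg n Zv" using nonneg_Zc by (simp add: nonneg_def Zv_def)
  show "trace_m n Zv = real K" using trace_Zc assms(1)
    by (simp add: trace_m_def Zv_def flip: sum_divide_distrib)
  have "sum_all n Zv = (1 / real a) * sum_all n Zc"
    by (simp add: sum_all_def Zv_def sum_distrib_left)
  thus "sum_all n Zv = real K * real a" using sum_all_Zc assms(1)
    by (simp add: power2_eq_square)
  have q: "qf n Zv x = (1 / real a) * qf n Zc x" for x
    using qf_lin[of n "1 / real a" Zc 0 Zc x] by (simp add: Zv_def)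
  show "psd n Zv" using psd_Zc \<open>symm n Zv\<close> by (simp add: psd_qf q)
  have "symm n (\<lambda>i j. idm i j - Zv i j)" using \<open>symm n Zv\<close> by (auto simp: symm_def idm_def)
  moreover have "0 \<le> qf n (\<lambda>i j. idm i j - Zv i j) x" for x
  proof -
    have "qf n (\<lambda>i j. idm i j - Zv i j) x = qf n idm x - (1 / real a) * qf n Zc x"
      using qf_lin[of n 1 idm "- (1 / real a)" Zc x] by (simp add: Zv_def)
    moreover have "(1 / real a) * qf n Zc x \<le> (\<Sum>i<n. (x i)^2)"
      using qf_Zc_le[of x] assms(1) by (simp add: field_simps)
    ultimately show ?thesis by (simp add: qf_idm)
  qed
  ultimately show "psd n (\<lambda>i j. idm i j - Zv i j)" by (simp add: psd_qf)
qed

lemma sum_sq_shift: "(\<Sum>c<K. (t + Y c)^2) = real K * t^2 + 2 * t * (\<Sum>c<K. Y c) + (\<Sum>c<K. (Y c)^2)"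
  by (simp add: power2_sum sum.distrib sum_distrib_left mult.assoc)

lemma witness_theta3:
  shows "psd (n + 1) (bordered (real K) (\<lambda>i. Zc i i) Zc)" "\<forall>i<n. Zc i i \<le> 1"
proof -
  show "\<forall>i<n. Zc i i \<le> 1" by (simp add: Zc_def)
  have "0 \<le> qf (Suc n) (bordered (real K) (\<lambda>i. Zc i i) Zc) x" for x
  proof -
    let ?Y = "\<lambda>c. \<Sum>i<n. u c i * x (Suc i)"
    have "qf (Suc n) (bordered (real K) (\<lambda>i. Zc i i) Zc) x = (\<Sum>c<K. (x 0 + ?Y c)^2)"
      unfolding qf_bordered sum_sq_shift Zc_diag sum_vv qf_Zc by simp
    thus ?thesis by (simp add: sum_nonneg)
  qed
  thus "psd (n + 1) (bordered (real K) (\<lambda>i. Zc i i) Zc)"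
    using symm_bordered[OF symm_Zc] by (simp add: psd_qf)
qed

definition "Xc i j = (if i \<in> S \<and> j \<in> S \<and> col i \<noteq> col j then 1 / (real K - 1) else 0)"

lemma Xc_eq: "Xc i j = (1 / (real K - 1)) * (vv i * vv j - Zc i j)"
  by (simp add: Xc_def vv_def Zc_def)

lemma ZX_ident: assumes "K \<ge> 1" shows "Zc i j + (real K - 1) * Xc i j = vv i * vv j"
proof (cases "K = 1")
  case True
  thus ?thesis using colK by (auto simp: Zc_def Xc_def vv_def)
next
  case False
  hence "real K - 1 \<noteq> 0" using assms by simp
  thus ?thesis by (simp add: Xc_eq field_simps)
qed

lemma qf_vv: "qf n (\<lambda>i j. vv i * vv j) x = (\<Sum>i<n. vv i * x i)^2"
  using qf_rank[where A="\<lambda>i j. vv i * vv j" and C="{0::nat}" and f="\<lambda>_ i. vv i" and m=n and x=x] by simp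

lemma witness_theta2:
  assumes "K \<ge> 1"
  shows "theta2_feas n E K Zc Xc"
    "\<forall>i<n. \<forall>j<n. i > j \<longrightarrow> 1 - Zc i i - Zc j j + Zc i j + (real K - 1) * Xc i j \<ge> 0"
    "\<forall>i<n. \<forall>j<n. i \<noteq> j \<longrightarrow> Zc i i - Zc i j - (real K - 1) * Xc i j \<ge> 0"
proof -
  have id: "Zc i j + (real K - 1) * Xc i j = vv i * vv j" for i j using ZX_ident[OF assms] .
  show "\<forall>i<n. \<forall>j<n. i > j \<longrightarrow> 1 - Zc i i - Zc j j + Zc i j + (real K - 1) * Xc i j \<ge> 0"
  proof (intro allI impI)
    fix i j
    have "1 - Zc i i - Zc j j + Zc i j + (real K - 1) * Xc i j = (1 - vv i) * (1 - vv j)"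
      using id[of i j] by (simp add: Zc_diag algebra_simps)
    thus "1 - Zc i i - Zc j j + Zc i j + (real K - 1) * Xc i j \<ge> 0" by (simp add: vv_def)
  qed
  show "\<forall>i<n. \<forall>j<n. i \<noteq> j \<longrightarrow> Zc i i - Zc i j - (real K - 1) * Xc i j \<ge> 0"
  proof (intro allI impI)
    fix i j
    have "Zc i i - Zc i j - (real K - 1) * Xc i j = vv i * (1 - vv j)"
      using id[of i j] by (simp add: Zc_diag algebra_simps)
    thus "Zc i i - Zc i j - (real K - 1) * Xc i j \<ge> 0" by (simp add: vv_def)
  qed
  have symX: "symm n Xc" by (auto simp: symm_def Xc_def)
  have nnX: "nonneg n Xc" using assms by (auto simp: nonneg_def Xc_def)
  have dX: "\<forall>i<n. Xc i i = 0" by (simp add: Xc_def)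
  have psdZX: "psd n (\<lambda>i j. Zc i j - Xc i j)"
  proof -
    have "symm n (\<lambda>i j. Zc i j - Xc i j)" using symX symm_Zc by (simp add: symm_def)
    moreover have "0 \<le> qf n (\<lambda>i j. Zc i j - Xc i j) x" for x
    proof -
      let ?Y = "\<lambda>c. \<Sum>i<n. u c i * x i"
      let ?Q = "\<Sum>c<K. (?Y c)^2"
      have qX: "qf n Xc x = (1 / (real K - 1)) * ((\<Sum>c<K. ?Y c)^2 - ?Q)"
      proof -
        have e: "Xc = (\<lambda>i j. (1 / (real K - 1)) * (\<lambda>i j. vv i * vv j) i j + (- (1 / (real K - 1))) * Zc i j)"
          by (intro ext) (simp add: Xc_eq algebra_simps)
        have "qf n Xc x = (1 / (real K - 1)) * qf n (\<lambda>i j. vv i * vv j) x + (- (1 / (real K - 1))) * qf n Zc x"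
          unfolding e by (rule qf_lin)
        thus ?thesis by (simp add: qf_vv sum_vv qf_Zc right_diff_distrib)
      qed
      have "qf n (\<lambda>i j. Zc i j - Xc i j) x = qf n Zc x - qf n Xc x"
        using qf_lin[of n 1 Zc "-1" Xc x] by simp
      hence "qf n (\<lambda>i j. Zc i j - Xc i j) x = ?Q - (1 / (real K - 1)) * ((\<Sum>c<K. ?Y c)^2 - ?Q)"
        by (simp only: qX qf_Zc)
      moreover have "?Q - (1 / (real K - 1)) * ((\<Sum>c<K. ?Y c)^2 - ?Q) \<ge> 0"
      proof (cases "K = 1")
        case True thus ?thesis by (simp add: sum_nonneg)
      next
        case False
        hence K1: "real K - 1 > 0" using assms by simp
        have cs: "(\<Sum>c<K. ?Y c)^2 \<le> ?Q * real K"
          using sum_squared_le_sum_of_squares[of ?Y "{..<K}"] by simp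
        have "?Q - (1 / (real K - 1)) * ((\<Sum>c<K. ?Y c)^2 - ?Q) = (real K * ?Q - (\<Sum>c<K. ?Y c)^2) / (real K - 1)"
          using K1 by (simp add: field_simps)
        also have "\<dots> \<ge> 0" using cs K1 by (intro divide_nonneg_pos) (simp_all add: mult.commute)
        finally show ?thesis .
      qed
      ultimately show ?thesis by simp
    qed
    ultimately show ?thesis by (simp add: psd_qf)
  qed
  have psdB: "psd (n + 1) (bordered 1 (\<lambda>i. Zc i i) (\<lambda>i j. Zc i j + (real K - 1) * Xc i j))"
  proof -
    have e: "(\<lambda>i j. Zc i j + (real K - 1) * Xc i j) = (\<lambda>i j. vv i * vv j)" using id by blast
    have "symm n (\<lambda>i j. vv i * vv j)" by (simp add: symm_def mult.commute)
    moreover have "0 \<le> qf (Suc n) (bordered 1 (\<lambda>i. Zc i i) (\<lambda>i j. vv i * vv j)) x" for x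
    proof -
      have "qf (Suc n) (bordered 1 (\<lambda>i. Zc i i) (\<lambda>i j. vv i * vv j)) x = (x 0 + (\<Sum>i<n. vv i * x (Suc i)))^2"
        unfolding qf_bordered qf_vv Zc_diag by (simp add: power2_sum)
      thus ?thesis by simp
    qed
    ultimately show ?thesis unfolding e using symm_bordered by (simp add: psd_qf)
  qed
  show "theta2_feas n E K Zc Xc"
    unfolding theta2_feas_def using symm_Zc symX zoe_Zc dX nonneg_Zc nnX psdZX psdB by blast
qed

end


lemma psd_sub: assumes "psd (Suc m) (bordered c d M)" "symm m M" shows "psd m M"
proof -
  have "0 \<le> qf m M x" for x
  proof -
    have "0 \<le> qf (Suc m) (bordered c d M) (\<lambda>t. if t = 0 then 0 else x (t - 1))"
      using assms(1) psd_qf by blast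
    thus ?thesis by (simp add: qf_bordered)
  qed
  thus ?thesis using assms(2) by (simp add: psd_qf)
qed

lemma bordered_ones:
  "qf (Suc m) (bordered c d M) (\<lambda>t. if t = 0 then - s else 1) = c * s^2 - 2 * s * (\<Sum>i<m. d i) + sum_all m M"
  by (simp add: qf_bordered sum_all_qf)

lemma sq_le_imp:
  fixes T s th :: real
  assumes "T^2 \<le> s * th * T" "0 \<le> s" "0 \<le> th"
  shows "T \<le> s * th"
proof (cases "T > 0")
  case True
  hence "T * T \<le> (s * th) * T" using assms(1) by (simp add: power2_eq_square mult.assoc)
  thus ?thesis using True by simp
next
  case False
  thus ?thesis using assms(2,3) by (meson mult_nonneg_nonneg not_le order_trans less_imp_le)
qed

lemma theta3_upper:
  assumes "symm n Z" "zero_on_edges n E Z" "psd (n + 1) (bordered (real k) (\<lambda>i. Z i i) Z)"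
    "k \<ge> 1" "0 \<le> lovasz_theta n E"
  shows "trace_m n Z \<le> real k * lovasz_theta n E"
proof -
  let ?T = "trace_m n Z" and ?t = "lovasz_theta n E"
  have pB: "psd (Suc n) (bordered (real k) (\<lambda>i. Z i i) Z)" using assms(3) by simp
  have pZ: "psd n Z" by (rule psd_sub[OF pB assms(1)])
  have up: "sum_all n Z \<le> ?t * ?T" by (rule theta_upper[OF assms(1,2) pZ])
  have "0 \<le> qf (Suc n) (bordered (real k) (\<lambda>i. Z i i) Z) (\<lambda>t. if t = 0 then - (?T / real k) else 1)"
    using pB psd_qf by blast
  hence "0 \<le> real k * (?T / real k)^2 - 2 * (?T / real k) * ?T + sum_all n Z"
    by (simp add: bordered_ones trace_m_def)
  hence "0 \<le> real k * sum_all n Z - ?T^2" using assms(4)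
    by (simp add: field_simps power2_eq_square)
  hence "?T^2 \<le> real k * ?t * ?T" using up assms(4)
    by (smt (verit) mult_left_mono mult.assoc of_nat_0_le_iff)
  thus ?thesis by (rule sq_le_imp) (use assms(5) in auto)
qed

lemma theta2_upper:
  assumes "theta2_feas n E k Z X" "k \<ge> 1" "0 \<le> lovasz_theta n E"
  shows "trace_m n Z \<le> real k * lovasz_theta n E"
proof -
  let ?T = "trace_m n Z" and ?t = "lovasz_theta n E"
  define M where "M = (\<lambda>i j. Z i j + (real k - 1) * X i j)"
  from assms(1) have sZ: "symm n Z" and sX: "symm n X" and zZ: "zero_on_edges n E Z"
    and pZX: "psd n (\<lambda>i j. Z i j - X i j)" and pB: "psd (Suc n) (bordered 1 (\<lambda>i. Z i i) M)"
    unfolding theta2_feas_def M_def by auto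
  have sM: "symm n M" using sZ sX by (simp add: symm_def M_def)
  have pM: "psd n M" by (rule psd_sub[OF pB sM])
  have qM: "qf n M x = qf n Z x + (real k - 1) * qf n X x" for x
    using qf_lin[of n 1 Z "real k - 1" X x] by (simp add: M_def)
  have qZX: "qf n (\<lambda>i j. Z i j - X i j) x = qf n Z x - qf n X x" for x
    using qf_lin[of n 1 Z "-1" X x] by simp
  have pZ: "psd n Z"
  proof -
    have "0 \<le> qf n Z x" for x
    proof -
      have "0 \<le> qf n M x" "0 \<le> qf n (\<lambda>i j. Z i j - X i j) x" using pM pZX psd_qf by blast+
      hence "0 \<le> qf n M x + (real k - 1) * qf n (\<lambda>i j. Z i j - X i j) x" using assms(2) by simp
      also have "\<dots> = real k * qf n Z x" by (simp add: qM qZX algebra_simps)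
      finally show ?thesis using assms(2) by (simp add: zero_le_mult_iff)
    qed
    thus ?thesis using sZ by (simp add: psd_qf)
  qed
  have up: "sum_all n Z \<le> ?t * ?T" by (rule theta_upper[OF sZ zZ pZ])
  have "0 \<le> qf n (\<lambda>i j. Z i j - X i j) (\<lambda>_. 1)" using pZX psd_qf by blast
  hence sX_le: "sum_all n X \<le> sum_all n Z" by (simp add: qZX sum_all_qf)
  have sM_eq: "sum_all n M = sum_all n Z + (real k - 1) * sum_all n X" by (simp add: sum_all_qf qM)
  have "0 \<le> qf (Suc n) (bordered 1 (\<lambda>i. Z i i) M) (\<lambda>t. if t = 0 then - ?T else 1)"
    using pB psd_qf by blast
  hence "0 \<le> ?T^2 - 2 * ?T * ?T + sum_all n M"
    by (simp add: bordered_ones trace_m_def)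
  hence "?T^2 \<le> sum_all n M" by (simp add: power2_eq_square)
  also have "\<dots> \<le> real k * sum_all n Z"
  proof -
    have "(real k - 1) * sum_all n X \<le> (real k - 1) * sum_all n Z"
      by (rule mult_left_mono[OF sX_le]) (use assms(2) in simp)
    thus ?thesis by (simp add: sM_eq algebra_simps)
  qed
  also have "\<dots> \<le> real k * (?t * ?T)"
    by (rule mult_left_mono[OF up]) simp
  also have "\<dots> = real k * ?t * ?T" by (simp add: mult.assoc)
  finally show ?thesis by (rule sq_le_imp) (use assms(3) in auto)
qed

lemma sum_eq_all:
  fixes f :: "nat \<Rightarrow> nat"
  assumes "(\<Sum>c<k. f c) = k * a" "\<forall>c<k. f c \<le> a"
  shows "\<forall>c<k. f c = a"
proof (rule ccontr)
  assume "\<not> (\<forall>c<k. f c = a)"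
  then obtain c where "c < k" "f c < a" using assms(2) le_neq_implies_less by blast
  hence "(\<Sum>c<k. f c) < (\<Sum>c<k. a)"
    by (intro sum_strict_mono_ex1) (use assms(2) in auto)
  thus False using assms(1) by simp
qed



theorem lemma5:
  fixes n k :: nat and E :: "nat \<Rightarrow> nat \<Rightarrow> bool"
  assumes "n \<ge> 1"
    and "\<forall>i<n. \<forall>j<n. E i j \<longleftrightarrow> E j i"
    and "\<forall>i<n. \<not> E i i"
    and "k \<ge> 1"
    and "real (alpha_k n E k) = real k * lovasz_theta n E"
  shows "vartheta_k n E k = vartheta'_k n E k
       \<and> vartheta'_k n E k = theta1_k n E k
       \<and> theta1_k n E k = theta2_k n E k
       \<and> theta2_k n E k = theta3_k n E k
       \<and> theta3_k n E k = real k * real (alpha n E)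
       \<and> real k * real (alpha n E) = real (alpha_k n E k)"
proof -
  define a where "a = alpha n E"
  define t where "t = lovasz_theta n E"
  have apos: "a \<ge> 1" unfolding a_def by (rule alpha_pos) (use assms(1,3) in auto)
  hence a0: "0 < a" by simp
  have at: "real a \<le> t"
  proof -
    obtain S0 where S0: "stable_set n E S0" "card S0 = a" using alpha_att a_def by blast
    have Ssub: "S0 \<subseteq> {0..<n}" using S0(1) by (simp add: stable_set_def)
    have colK: "\<forall>i\<in>S0. (\<lambda>_. 0::nat) i < 1" by simp
    have cls: "\<forall>c<1. card {i\<in>S0. (\<lambda>_. 0::nat) i = c} = a" using S0(2) by simp
    have proper: "\<forall>i\<in>S0. \<forall>j\<in>S0. E i j \<longrightarrow> (\<lambda>_. 0::nat) i \<noteq> (\<lambda>_. 0::nat) j"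
      using S0(1) by (simp add: stable_set_def)
    note W = witness_vartheta[OF Ssub colK cls proper a0]
    have "sum_all n (\<lambda>i j. 1 / real a * Zc S0 (\<lambda>_. 0) i j) \<in> {sum_all n Z | Z. symm n Z \<and> zero_on_edges n E Z \<and>
      trace_m n Z = 1 \<and> psd n Z}"
      by (rule CollectI, rule exI[where x="\<lambda>i j. 1 / real a * Zc S0 (\<lambda>_. 0) i j"]) (use W in simp)
    hence "sum_all n (\<lambda>i j. 1 / real a * Zc S0 (\<lambda>_. 0) i j) \<le> t"
      unfolding t_def lovasz_theta_def by (rule cSup_upper[OF _ theta_set_bdd])
    thus ?thesis using W by simp
  qed
  have akle: "alpha_k n E k \<le> k * a" unfolding a_def by (rule alphak_le)
  have ak: "real (alpha_k n E k) = real k * real a" and ta: "t = real a"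
  proof -
    have "real k * real a \<le> real k * t" using at by (simp add: mult_left_mono)
    moreover have "real (alpha_k n E k) \<le> real k * real a" using akle by (metis of_nat_le_iff of_nat_mult)
    ultimately show "real (alpha_k n E k) = real k * real a" using assms(5) t_def by simp
    thus "t = real a" using assms(4,5) t_def by simp
  qed
  have t0: "0 \<le> lovasz_theta n E" using ta t_def by simp
  obtain S where S: "k_colorable_set n E k S" "card S = alpha_k n E k" using alphak_att by blast
  then obtain col where col: "\<forall>i\<in>S. col i < k" "\<forall>i\<in>S. \<forall>j\<in>S. E i j \<longrightarrow> col i \<noteq> col j"
    unfolding k_colorable_set_def by blast
  have Ssub: "S \<subseteq> {0..<n}" using S(1) by (simp add: k_colorable_set_def)
  have fin: "finite S" using Ssub by (auto intro: finite_subset)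
  have cardS: "card S = k * a" using S(2) ak by (metis of_nat_eq_iff of_nat_mult)
  have cls: "\<forall>c<k. card {i\<in>S. col i = c} = a"
  proof (rule sum_eq_all)
    show "(\<Sum>c<k. card {i\<in>S. col i = c}) = k * a" using card_classes[OF fin col(1)] cardS by simp
    show "\<forall>c<k. card {i\<in>S. col i = c} \<le> a"
      unfolding a_def using alpha_ge class_stable[OF S(1) col(2)] by blast
  qed
  let ?v = "real k * real a"
  note W = witness_vartheta[OF Ssub col(1) cls col(2) a0]
  have V: "vartheta_k n E k = ?v"
    unfolding vartheta_k_def
  proof (rule cSup_eq_maximum)
    show "?v \<in> {sum_all n Z | Z. symm n Z \<and> zero_on_edges n E Z \<and>
      trace_m n Z = real k \<and> psd n Z \<and> psd n (\<lambda>i j. idm i j - Z i j)}"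
      by (rule CollectI, rule exI[where x="\<lambda>i j. 1 / real a * Zc S col i j"]) (use W in simp)
    next
      fix x assume "x \<in> {sum_all n Z | Z. symm n Z \<and> zero_on_edges n E Z \<and>
        trace_m n Z = real k \<and> psd n Z \<and> psd n (\<lambda>i j. idm i j - Z i j)}"
      then obtain Z where Z: "x = sum_all n Z" "symm n Z" "zero_on_edges n E Z" "trace_m n Z = real k" "psd n Z"
        by blast
      have "sum_all n Z \<le> lovasz_theta n E * trace_m n Z" by (rule theta_upper[OF Z(2,3,5)])
      thus "x \<le> ?v" using Z(1,4) ta t_def by (simp add: mult.commute)
  qed
  have V': "vartheta'_k n E k = ?v"
    unfolding vartheta'_k_def
  proof (rule cSup_eq_maximum)
    show "?v \<in> {sum_all n Z | Z. symm n Z \<and> zero_on_edges n E Z \<and>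
      trace_m n Z = real k \<and> psd n Z \<and> psd n (\<lambda>i j. idm i j - Z i j) \<and> nonneg n Z}"
      by (rule CollectI, rule exI[where x="\<lambda>i j. 1 / real a * Zc S col i j"]) (use W in simp)
    next
      fix x assume "x \<in> {sum_all n Z | Z. symm n Z \<and> zero_on_edges n E Z \<and>
        trace_m n Z = real k \<and> psd n Z \<and> psd n (\<lambda>i j. idm i j - Z i j) \<and> nonneg n Z}"
      then obtain Z where Z: "x = sum_all n Z" "symm n Z" "zero_on_edges n E Z" "trace_m n Z = real k" "psd n Z"
        by blast
      have "sum_all n Z \<le> lovasz_theta n E * trace_m n Z" by (rule theta_upper[OF Z(2,3,5)])
      thus "x \<le> ?v" using Z(1,4) ta t_def by (simp add: mult.commute)
  qed
  have trZ: "trace_m n (Zc S col) = ?v" by (rule trace_Zc[OF Ssub col(1) cls col(2)])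
  note W2 = witness_theta2[OF Ssub col(1) cls col(2) assms(4)]
  have T1: "theta1_k n E k = ?v"
    unfolding theta1_k_def
  proof (rule cSup_eq_maximum)
    show "?v \<in> {trace_m n Z | Z X. theta2_feas n E k Z X \<and>
      (\<forall>i<n. \<forall>j<n. i > j \<longrightarrow> 1 - Z i i - Z j j + Z i j + (real k - 1) * X i j \<ge> 0) \<and>
      (\<forall>i<n. \<forall>j<n. i \<noteq> j \<longrightarrow> Z i i - Z i j - (real k - 1) * X i j \<ge> 0)}"
      by (rule CollectI, rule exI[where x="Zc S col"], rule exI[where x="Xc S col k"]) (use W2 trZ in simp)
    next
      fix x assume "x \<in> {trace_m n Z | Z X. theta2_feas n E k Z X \<and>
        (\<forall>i<n. \<forall>j<n. i > j \<longrightarrow> 1 - Z i i - Z j j + Z i j + (real k - 1) * X i j \<ge> 0) \<and>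
        (\<forall>i<n. \<forall>j<n. i \<noteq> j \<longrightarrow> Z i i - Z i j - (real k - 1) * X i j \<ge> 0)}"
      then obtain Z X where Z: "x = trace_m n Z" "theta2_feas n E k Z X" by blast
      have "trace_m n Z \<le> real k * lovasz_theta n E" by (rule theta2_upper[OF Z(2) assms(4) t0])
      thus "x \<le> ?v" using Z(1) ta t_def by simp
  qed
  have T2: "theta2_k n E k = ?v"
    unfolding theta2_k_def
  proof (rule cSup_eq_maximum)
    show "?v \<in> {trace_m n Z | Z X. theta2_feas n E k Z X}"
      by (rule CollectI, rule exI[where x="Zc S col"], rule exI[where x="Xc S col k"]) (use W2 trZ in simp)
    next
      fix x assume "x \<in> {trace_m n Z | Z X. theta2_feas n E k Z X}"
      then obtain Z X where Z: "x = trace_m n Z" "theta2_feas n E k Z X" by blast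
      have "trace_m n Z \<le> real k * lovasz_theta n E" by (rule theta2_upper[OF Z(2) assms(4) t0])
      thus "x \<le> ?v" using Z(1) ta t_def by simp
  qed
  note W3 = witness_theta3[OF Ssub col(1) cls col(2)]
  have T3: "theta3_k n E k = ?v"
    unfolding theta3_k_def
  proof (rule cSup_eq_maximum)
    show "?v \<in> {trace_m n Z | Z. symm n Z \<and> zero_on_edges n E Z \<and>
      (\<forall>i<n. Z i i \<le> 1) \<and> nonneg n Z \<and> psd (n + 1) (bordered (real k) (\<lambda>i. Z i i) Z)}"
      by (rule CollectI, rule exI[where x="Zc S col"])
        (use W3 trZ symm_Zc[OF Ssub col(1) cls col(2)] zoe_Zc[OF Ssub col(1) cls col(2)] nonneg_Zc[OF Ssub col(1) cls col(2)] in simp)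
    next
      fix x assume "x \<in> {trace_m n Z | Z. symm n Z \<and> zero_on_edges n E Z \<and>
        (\<forall>i<n. Z i i \<le> 1) \<and> nonneg n Z \<and> psd (n + 1) (bordered (real k) (\<lambda>i. Z i i) Z)}"
      then obtain Z where Z: "x = trace_m n Z" "symm n Z" "zero_on_edges n E Z"
        "psd (n + 1) (bordered (real k) (\<lambda>i. Z i i) Z)" by blast
      have "trace_m n Z \<le> real k * lovasz_theta n E" by (rule theta3_upper[OF Z(2,3,4) assms(4) t0])
      thus "x \<le> ?v" using Z(1) ta t_def by simp
  qed
  show ?thesis using V V' T1 T2 T3 ak by (simp add: a_def)
qed


end
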